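(* Let $n\ge 3$, $m\ge 2$, and $F,R$ be as in the context. Suppose that for integers $a_{ij}$ ($1\le i<j-1\le n-2$), $b_i,c_i$ ($1\le i\le n-2$), $d_i$ ($1\le i\le n-3$) the element $$w=\prod_{i<j-1}[s_i,s_j]^{a_{ij}}\cdot\prod_i[s_i,s_{i+1},s_i]^{b_i}\cdot\prod_i[s_i,s_{i+1},s_is_{i+1}^{-1}]^{c_i}\cdot\prod_i[[s_i,s_{i+1}],[s_{i+1},s_{i+2}]]^{d_i}$$ lies in $[R,F]$. Then $m\mid a_{ij}$ for all $i,j$, $m\mid b_i$ and $\gcd\!\big(m,\binom{m}{2}\big)\mid c_i$ for all $i$, and $\gcd(2,m)\mid d_i$ for all $i$.
   Context: Commutator conventions: $[a,b]=a^{-1}b^{-1}ab$, $a^b=b^{-1}ab$, and commutators are left-normed: $[a_1,\dots,a_k]=[[a_1,\dots,a_{k-1}],a_k]$. Let $F$ be the free group on $s_1,\dots,s_{n-1}$ and let $R$ be the normal closure in $F$ of the following relators: $s_i^m$ ($1\le i\le n-1$); $[s_i,s_j]$ ($1\le i<j-1\le n-2$); $[s_i,s_{i+1},s_i]$ and $[s_i,s_{i+1},s_{i+1}]$ ($1\le i\le n-2$); $[[s_i,s_{i+1}],[s_{i+1},s_{i+2}]]$ ($1\le i\le n-3$). It is known that $F/R\cong \mathrm{UT}_n(\mathbb Z/m\mathbb Z)$ via $s_i\mapsto I+E_{i,i+1}$. *)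

theory Defs
  imports "HOL-Algebra.Algebra"
begin

text \<open>A letter (i, False) stands for s_i, a letter (i, True) for s_i inverse.\<close>

definition inv_letter :: "nat \<times> bool \<Rightarrow> nat \<times> bool" where
  "inv_letter x = (fst x, \<not> snd x)"

fun reduced :: "(nat \<times> bool) list \<Rightarrow> bool" where
  "reduced [] = True"
| "reduced [x] = True"
| "reduced (x # y # ys) = (y \<noteq> inv_letter x \<and> reduced (y # ys))"

fun push_letter :: "nat \<times> bool \<Rightarrow> (nat \<times> bool) list \<Rightarrow> (nat \<times> bool) list" where
  "push_letter x [] = [x]"
| "push_letter x (y # ys) = (if y = inv_letter x then ys else x # y # ys)"

definition reduce :: "(nat \<times> bool) list \<Rightarrow> (nat \<times> bool) list" where
  "reduce ws = foldr push_letter ws []"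

definition free_group :: "nat \<Rightarrow> (nat \<times> bool) list monoid" where
  "free_group n = \<lparr> carrier = {ws. reduced ws \<and> set ws \<subseteq> {1..n-1} \<times> UNIV},
                    monoid.mult = (\<lambda>xs ys. reduce (xs @ ys)),
                    one = [] \<rparr>"

definition gen :: "nat \<Rightarrow> (nat \<times> bool) list" where
  "gen i = [(i, False)]"

text \<open>Commutator convention [a,b] = a^-1 b^-1 a b.\<close>
definition comm :: "('a, 'b) monoid_scheme \<Rightarrow> 'a \<Rightarrow> 'a \<Rightarrow> 'a" where
  "comm G a b = inv\<^bsub>G\<^esub> a \<otimes>\<^bsub>G\<^esub> inv\<^bsub>G\<^esub> b \<otimes>\<^bsub>G\<^esub> a \<otimes>\<^bsub>G\<^esub> b"

definition normal_closure :: "('a, 'b) monoid_scheme \<Rightarrow> 'a set \<Rightarrow> 'a set" where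
  "normal_closure G S =
     generate G (\<Union>g\<in>carrier G. (\<lambda>r. g \<otimes>\<^bsub>G\<^esub> r \<otimes>\<^bsub>G\<^esub> inv\<^bsub>G\<^esub> g) ` S)"

definition comm_subgroup :: "('a, 'b) monoid_scheme \<Rightarrow> 'a set \<Rightarrow> 'a set \<Rightarrow> 'a set" where
  "comm_subgroup G A B = generate G {comm G a b | a b. a \<in> A \<and> b \<in> B}"

definition list_prod :: "('a, 'b) monoid_scheme \<Rightarrow> 'a list \<Rightarrow> 'a" where
  "list_prod G xs = foldr (\<lambda>x y. x \<otimes>\<^bsub>G\<^esub> y) xs \<one>\<^bsub>G\<^esub>"

definition UT_relators :: "nat \<Rightarrow> nat \<Rightarrow> (nat \<times> bool) list set" where
  "UT_relators n m = (let F = free_group n; s = gen in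
      {s i [^]\<^bsub>F\<^esub> m | i. 1 \<le> i \<and> i \<le> n - 1}
    \<union> {comm F (s i) (s j) | i j. 1 \<le> i \<and> i < j - 1 \<and> j - 1 \<le> n - 2}
    \<union> {comm F (comm F (s i) (s (i+1))) (s i) | i. 1 \<le> i \<and> i \<le> n - 2}
    \<union> {comm F (comm F (s i) (s (i+1))) (s (i+1)) | i. 1 \<le> i \<and> i \<le> n - 2}
    \<union> {comm F (comm F (s i) (s (i+1))) (comm F (s (i+1)) (s (i+2))) | i. 1 \<le> i \<and> i \<le> n - 3})"

definition UT_R :: "nat \<Rightarrow> nat \<Rightarrow> (nat \<times> bool) list set" where
  "UT_R n m = normal_closure (free_group n) (UT_relators n m)"

definition w_elem :: "nat \<Rightarrow> (nat \<Rightarrow> nat \<Rightarrow> int) \<Rightarrow> (nat \<Rightarrow> int) \<Rightarrow> (nat \<Rightarrow> int)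
                      \<Rightarrow> (nat \<Rightarrow> int) \<Rightarrow> (nat \<times> bool) list" where
  "w_elem n a b c d = (let F = free_group n; s = gen in
      list_prod F [comm F (s i) (s j) [^]\<^bsub>F\<^esub> a i j. i \<leftarrow> [1..<n], j \<leftarrow> [i+2..<n]]
   \<otimes>\<^bsub>F\<^esub> list_prod F [comm F (comm F (s i) (s (i+1))) (s i) [^]\<^bsub>F\<^esub> b i. i \<leftarrow> [1..<n-1]]
   \<otimes>\<^bsub>F\<^esub> list_prod F [comm F (comm F (s i) (s (i+1)))
                        (s i \<otimes>\<^bsub>F\<^esub> inv\<^bsub>F\<^esub> (s (i+1))) [^]\<^bsub>F\<^esub> c i. i \<leftarrow> [1..<n-1]]
   \<otimes>\<^bsub>F\<^esub> list_prod F [comm F (comm F (s i) (s (i+1))) (comm F (s (i+1)) (s (i+2)))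
                        [^]\<^bsub>F\<^esub> d i. i \<leftarrow> [1..<n-2]])"

end

theory Submission
  imports Defs "HOL-Library.Product_Plus"
begin


lemma inv_letter_inv[simp]: "inv_letter (inv_letter x) = x"
  by (simp add: inv_letter_def)

lemma inv_letter_neq[simp]: "inv_letter x \<noteq> x"
  by (cases x) (simp add: inv_letter_def)

lemma reduced_tl: "reduced (x # ys) \<Longrightarrow> reduced ys"
  by (cases ys) auto

lemma reduced_push: "reduced w \<Longrightarrow> reduced (push_letter x w)"
  by (cases w) (auto dest: reduced_tl)

lemma push_cancel: "reduced v \<Longrightarrow> push_letter x (push_letter (inv_letter x) v) = v"
proof (cases v)
  case Nil then show ?thesis by simp
next
  case (Cons y v')
  assume r: "reduced v"
  show ?thesis
  proof (cases "y = x")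
    case True
    then show ?thesis using r Cons by (cases v') auto
  next
    case False
    then show ?thesis using Cons by auto
  qed
qed

lemma reduced_foldr: "reduced w \<Longrightarrow> reduced (foldr push_letter l w)"
  by (induction l) (auto intro: reduced_push)

lemma reduced_reduce: "reduced (reduce l)"
  unfolding reduce_def by (rule reduced_foldr) simp

lemma reduce_reduced: "reduced l \<Longrightarrow> reduce l = l"
proof (induction l rule: reduced.induct)
  case 1 then show ?case by (simp add: reduce_def)
next
  case (2 x) then show ?case by (simp add: reduce_def)
next
  case (3 x y ys)
  then have "reduce (y # ys) = y # ys" by auto
  then show ?case using 3(2) by (simp add: reduce_def)
qed

lemma foldr_push_push:
  assumes "reduced r" "reduced w"
  shows "foldr push_letter (push_letter x r) w = push_letter x (foldr push_letter r w)"
proof (cases r)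
  case Nil then show ?thesis by simp
next
  case (Cons y r')
  show ?thesis
  proof (cases "y = inv_letter x")
    case True
    have "reduced (foldr push_letter r' w)" using assms(2) by (rule reduced_foldr)
    then show ?thesis using Cons True by (simp add: push_cancel)
  next
    case False then show ?thesis using Cons by simp
  qed
qed

lemma foldr_push_reduce:
  assumes "reduced w"
  shows "foldr push_letter (reduce l) w = foldr push_letter l w"
proof (induction l)
  case Nil then show ?case by (simp add: reduce_def)
next
  case (Cons x l)
  have "reduce (x # l) = push_letter x (reduce l)" by (simp add: reduce_def)
  then have "foldr push_letter (reduce (x # l)) w = push_letter x (foldr push_letter (reduce l) w)"
    using foldr_push_push[OF reduced_reduce assms] by simp
  then show ?case using Cons by simp
qed

lemma reduce_append: "reduce (xs @ ys) = foldr push_letter xs (reduce ys)"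
  by (simp add: reduce_def)

lemma set_push: "set (push_letter x w) \<subseteq> insert x (set w)"
  by (cases w) auto

lemma set_foldr_push: "set (foldr push_letter l w) \<subseteq> set l \<union> set w"
  by (induction l) (use set_push in fastforce)+

lemma set_reduce: "set (reduce l) \<subseteq> set l"
  unfolding reduce_def using set_foldr_push[of l "[]"] by simp

lemma inv_cancel_word: "reduced ws \<Longrightarrow> foldr push_letter (rev (map inv_letter ws)) ws = []"
proof (induction ws)
  case Nil then show ?case by simp
next
  case (Cons x xs)
  have r: "reduced xs" using Cons.prems by (rule reduced_tl)
  have "foldr push_letter (rev (map inv_letter (x # xs))) (x # xs)
        = foldr push_letter (rev (map inv_letter xs)) (push_letter (inv_letter x) (x # xs))"
    by simp
  also have "push_letter (inv_letter x) (x # xs) = xs" by simp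
  finally show ?case using Cons.IH[OF r] by simp
qed

definition FG :: "nat \<Rightarrow> (nat \<times> bool) list monoid" where "FG n = free_group n"

lemma free_group_group: "group (free_group n)"
proof (rule groupI)
  let ?G = "free_group n"
  show "x \<otimes>\<^bsub>?G\<^esub> y \<in> carrier ?G" if "x \<in> carrier ?G" "y \<in> carrier ?G" for x y
    using that set_reduce[of "x @ y"] by (auto simp: free_group_def reduced_reduce)
  show "\<one>\<^bsub>?G\<^esub> \<in> carrier ?G" by (simp add: free_group_def)
  show "x \<otimes>\<^bsub>?G\<^esub> y \<otimes>\<^bsub>?G\<^esub> z = x \<otimes>\<^bsub>?G\<^esub> (y \<otimes>\<^bsub>?G\<^esub> z)"
    if "x \<in> carrier ?G" "y \<in> carrier ?G" "z \<in> carrier ?G" for x y z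
  proof -
    have rz: "reduced z" using that by (simp add: free_group_def)
    have "reduce (reduce (x @ y) @ z) = foldr push_letter (reduce (x @ y)) (reduce z)"
      by (simp add: reduce_append)
    also have "\<dots> = foldr push_letter (x @ y) (reduce z)"
      by (rule foldr_push_reduce[OF reduced_reduce])
    also have "\<dots> = foldr push_letter x (reduce (y @ z))" by (simp add: reduce_append)
    also have "\<dots> = foldr push_letter x (reduce (reduce (y @ z)))"
      by (simp add: reduce_reduced reduced_reduce)
    also have "\<dots> = reduce (x @ reduce (y @ z))" by (simp add: reduce_append)
    finally show ?thesis by (simp add: free_group_def)
  qed
  show "\<one>\<^bsub>?G\<^esub> \<otimes>\<^bsub>?G\<^esub> x = x" if "x \<in> carrier ?G" for x
    using that by (simp add: free_group_def reduce_reduced)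
  show "\<exists>y\<in>carrier ?G. y \<otimes>\<^bsub>?G\<^esub> x = \<one>\<^bsub>?G\<^esub>" if "x \<in> carrier ?G" for x
  proof
    let ?y = "reduce (rev (map inv_letter x))"
    have rx: "reduced x" using that by (simp add: free_group_def)
    have "reduce (?y @ x) = foldr push_letter ?y (reduce x)" by (simp add: reduce_append)
    also have "\<dots> = foldr push_letter (rev (map inv_letter x)) x"
      using foldr_push_reduce[OF rx] by (simp add: reduce_reduced rx)
    also have "\<dots> = []" by (rule inv_cancel_word[OF rx])
    finally show "?y \<otimes>\<^bsub>?G\<^esub> x = \<one>\<^bsub>?G\<^esub>" by (simp add: free_group_def)
    have "set ?y \<subseteq> set (rev (map inv_letter x))" by (rule set_reduce)
    then show "?y \<in> carrier ?G" using that
      by (fastforce simp: free_group_def reduced_reduce inv_letter_def)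
  qed
qed

lemma gen_carrier: "1 \<le> i \<Longrightarrow> i \<le> n - 1 \<Longrightarrow> gen i \<in> carrier (free_group n)"
  by (simp add: free_group_def gen_def)

definition lval :: "('g, 'x) monoid_scheme \<Rightarrow> (nat \<Rightarrow> 'g) \<Rightarrow> nat \<times> bool \<Rightarrow> 'g" where
  "lval G h l = (if snd l then inv\<^bsub>G\<^esub> (h (fst l)) else h (fst l))"

definition evalw :: "('g, 'x) monoid_scheme \<Rightarrow> (nat \<Rightarrow> 'g) \<Rightarrow> (nat \<times> bool) list \<Rightarrow> 'g" where
  "evalw G h ws = foldr (\<lambda>l acc. lval G h l \<otimes>\<^bsub>G\<^esub> acc) ws \<one>\<^bsub>G\<^esub>"

locale evalctx = group G for G (structure) +
  fixes h :: "nat \<Rightarrow> 'a"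
  assumes h_closed[simp]: "h i \<in> carrier G"
begin

lemma lval_closed[simp]: "lval G h l \<in> carrier G"
  by (simp add: lval_def)

lemma evalw_Nil[simp]: "evalw G h [] = \<one>" by (simp add: evalw_def)
lemma evalw_Cons[simp]: "evalw G h (l # ws) = lval G h l \<otimes> evalw G h ws" by (simp add: evalw_def)

lemma evalw_closed[simp]: "evalw G h ws \<in> carrier G"
  by (induction ws) auto

lemma lval_inv: "lval G h (inv_letter l) \<otimes> lval G h l = \<one>"
  by (cases l) (auto simp: lval_def inv_letter_def)

lemma lval_inv': "lval G h l \<otimes> lval G h (inv_letter l) = \<one>"
  using lval_inv[of "inv_letter l"] by simp

lemma evalw_push: "evalw G h (push_letter x w) = lval G h x \<otimes> evalw G h w"
proof (cases w)
  case Nil then show ?thesis by simp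
next
  case (Cons y ys)
  show ?thesis
  proof (cases "y = inv_letter x")
    case True
    have "lval G h x \<otimes> (lval G h y \<otimes> evalw G h ys) = (lval G h x \<otimes> lval G h y) \<otimes> evalw G h ys"
      by (simp add: m_assoc)
    then show ?thesis using Cons True lval_inv' by simp
  qed (use Cons in simp)
qed

lemma evalw_append: "evalw G h (xs @ ys) = evalw G h xs \<otimes> evalw G h ys"
  by (induction xs) (auto simp: m_assoc)

lemma evalw_foldr: "evalw G h (foldr push_letter l w) = evalw G h l \<otimes> evalw G h w"
  by (induction l) (auto simp: evalw_push m_assoc)

lemma evalw_reduce: "evalw G h (reduce l) = evalw G h l"
  unfolding reduce_def by (simp add: evalw_foldr)

lemma evalw_mult: "evalw G h (x \<otimes>\<^bsub>free_group n\<^esub> y) = evalw G h x \<otimes> evalw G h y"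
  by (simp add: free_group_def evalw_reduce evalw_append)

lemma evalw_hom: "evalw G h \<in> hom (free_group n) G"
  by (rule homI) (auto simp: evalw_mult)

lemma evalw_group_hom: "group_hom (free_group n) G (evalw G h)"
  by (simp add: group_hom_def group_hom_axioms_def free_group_group evalw_hom is_group)

lemma evalw_gen[simp]: "evalw G h (gen i) = h i"
  by (simp add: gen_def lval_def)

lemma evalw_rinv: "evalw G h (rev (map inv_letter ws)) = inv (evalw G h ws)"
proof (induction ws)
  case (Cons l ws)
  have "evalw G h (rev (map inv_letter (l # ws))) = inv (evalw G h ws) \<otimes> lval G h (inv_letter l)"
    using Cons by (simp add: evalw_append)
  also have "lval G h (inv_letter l) = inv (lval G h l)"
    using lval_inv' by (simp add: inv_equality[symmetric] lval_inv)
  finally show ?case by (simp add: inv_mult_group)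
qed simp

lemma evalw_inv: "x \<in> carrier (free_group n) \<Longrightarrow> evalw G h (inv\<^bsub>free_group n\<^esub> x) = inv (evalw G h x)"
  using group_hom.hom_inv[OF evalw_group_hom] by blast

lemma evalw_comm: "x \<in> carrier (free_group n) \<Longrightarrow> y \<in> carrier (free_group n) \<Longrightarrow>
   evalw G h (comm (free_group n) x y) = comm G (evalw G h x) (evalw G h y)"
  by (simp add: comm_def evalw_mult evalw_inv group.inv_closed[OF free_group_group]
     monoid.m_closed[OF group.is_monoid[OF free_group_group]])

lemma evalw_ipow: "x \<in> carrier (free_group n) \<Longrightarrow> evalw G h (x [^]\<^bsub>free_group n\<^esub> (k::int)) = evalw G h x [^] k"
  using group_hom.hom_int_pow[OF evalw_group_hom] by blast

lemma evalw_npow: "x \<in> carrier (free_group n) \<Longrightarrow> evalw G h (x [^]\<^bsub>free_group n\<^esub> (k::nat)) = evalw G h x [^] k"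
  using group_hom.hom_nat_pow[OF evalw_group_hom] by blast


lemma cancel1[simp]: "x \<in> carrier G \<Longrightarrow> y \<in> carrier G \<Longrightarrow> x \<otimes> (inv x \<otimes> y) = y"
  by (simp add: m_assoc[symmetric])
lemma cancel2[simp]: "x \<in> carrier G \<Longrightarrow> y \<in> carrier G \<Longrightarrow> inv x \<otimes> (x \<otimes> y) = y"
  by (simp add: m_assoc[symmetric])

lemma comm_closed[simp]: "x \<in> carrier G \<Longrightarrow> y \<in> carrier G \<Longrightarrow> comm G x y \<in> carrier G"
  by (simp add: comm_def)

lemma comm_mult_right: "k \<in> carrier G \<Longrightarrow> a \<in> carrier G \<Longrightarrow> e \<in> carrier G \<Longrightarrow>
  comm G k (a \<otimes> e) = comm G k e \<otimes> (inv e \<otimes> comm G k a \<otimes> e)"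
  by (simp add: comm_def m_assoc inv_mult_group)

lemma comm_inv_right: "k \<in> carrier G \<Longrightarrow> a \<in> carrier G \<Longrightarrow>
  comm G k (inv a) = a \<otimes> inv (comm G k a) \<otimes> inv a"
  by (simp add: comm_def m_assoc inv_mult_group)

lemma comm_mult_left: "k1 \<in> carrier G \<Longrightarrow> k2 \<in> carrier G \<Longrightarrow> g \<in> carrier G \<Longrightarrow>
  comm G (k1 \<otimes> k2) g = inv k2 \<otimes> comm G k1 g \<otimes> k2 \<otimes> comm G k2 g"
  by (simp add: comm_def m_assoc inv_mult_group)

lemma comm_inv_left: "k \<in> carrier G \<Longrightarrow> g \<in> carrier G \<Longrightarrow>
  comm G (inv k) g = k \<otimes> inv (comm G k g) \<otimes> inv k"
  by (simp add: comm_def m_assoc inv_mult_group)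

lemma comm_conj_left: "k \<in> carrier G \<Longrightarrow> f \<in> carrier G \<Longrightarrow> g \<in> carrier G \<Longrightarrow>
  comm G (f \<otimes> k \<otimes> inv f) g = f \<otimes> comm G k (inv f \<otimes> g \<otimes> f) \<otimes> inv f"
  by (simp add: comm_def m_assoc inv_mult_group)


definition conjN :: "'a set \<Rightarrow> 'a \<Rightarrow> bool" where
  "conjN N g \<longleftrightarrow> g \<in> carrier G \<and> (\<forall>x\<in>N. g \<otimes> x \<otimes> inv g \<in> N \<and> inv g \<otimes> x \<otimes> g \<in> N)"

lemma conjN_inv: "conjN N g \<Longrightarrow> conjN N (inv g)"
  by (simp add: conjN_def)

lemma conjN_mult:
  assumes "conjN N a" "conjN N b" "N \<subseteq> carrier G"
  shows "conjN N (a \<otimes> b)"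
proof -
  have c: "a \<in> carrier G" "b \<in> carrier G" using assms by (auto simp: conjN_def)
  { fix x assume x: "x \<in> N"
    then have xc: "x \<in> carrier G" using assms by auto
    have "a \<otimes> b \<otimes> x \<otimes> inv (a \<otimes> b) = a \<otimes> (b \<otimes> x \<otimes> inv b) \<otimes> inv a"
      using c xc by (simp add: m_assoc inv_mult_group)
    moreover have "inv (a \<otimes> b) \<otimes> x \<otimes> (a \<otimes> b) = inv b \<otimes> (inv a \<otimes> x \<otimes> a) \<otimes> b"
      using c xc by (simp add: m_assoc inv_mult_group)
    ultimately have "a \<otimes> b \<otimes> x \<otimes> inv (a \<otimes> b) \<in> N \<and> inv (a \<otimes> b) \<otimes> x \<otimes> (a \<otimes> b) \<in> N"
      using assms x by (simp add: conjN_def) }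
  then show ?thesis using c by (simp add: conjN_def)
qed

lemma relators_carrier: "UT_relators n m \<subseteq> carrier (free_group n)"
proof -
  have g: "\<And>i. 1 \<le> i \<Longrightarrow> i \<le> n - 1 \<Longrightarrow> gen i \<in> carrier (free_group n)" by (rule gen_carrier)
  interpret F: group "free_group n" by (rule free_group_group)
  have cc: "\<And>x y. x \<in> carrier (free_group n) \<Longrightarrow> y \<in> carrier (free_group n) \<Longrightarrow> comm (free_group n) x y \<in> carrier (free_group n)"
    by (simp add: comm_def)
  show ?thesis unfolding UT_relators_def Let_def
    by (auto intro!: cc g)
qed

lemma generic:
  assumes N: "subgroup N G"
    and H1: "\<And>i x. x \<in> N \<Longrightarrow> h i \<otimes> x \<otimes> inv (h i) \<in> N \<and> inv (h i) \<otimes> x \<otimes> h i \<in> N"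
    and H2: "\<And>\<rho> i. \<rho> \<in> UT_relators n m \<Longrightarrow> comm G (evalw G h \<rho>) (h i) \<in> N"
    and x: "x \<in> comm_subgroup (free_group n) (UT_R n m) (carrier (free_group n))"
  shows "evalw G h x \<in> N"
proof -
  interpret F: group "free_group n" by (rule free_group_group)
  have Nc: "N \<subseteq> carrier G" using N by (rule subgroup.subset)
  have Nm: "\<And>a b. a \<in> N \<Longrightarrow> b \<in> N \<Longrightarrow> a \<otimes> b \<in> N" using N by (rule subgroup.m_closed)
  have Ni: "\<And>a. a \<in> N \<Longrightarrow> inv a \<in> N" using N by (rule subgroup.m_inv_closed)
  have N1: "\<one> \<in> N" using N by (rule subgroup.one_closed)
  have Ngen: "conjN N (h i)" for i using H1 by (simp add: conjN_def)
  have Nlval: "conjN N (lval G h l)" for l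
    using Ngen conjN_inv by (simp add: lval_def)
  have A: "conjN N (evalw G h ws)" for ws
  proof (induction ws)
    case Nil then show ?case using Nc by (auto simp: conjN_def)
  next
    case (Cons l ws) then show ?case using conjN_mult[OF Nlval _ Nc] by simp
  qed
  have B: "comm G k (evalw G h ws) \<in> N"
    if k: "k \<in> carrier G" and kg: "\<And>i. comm G k (h i) \<in> N" for k ws
  proof (induction ws)
    case Nil then show ?case using k N1 by (simp add: comm_def)
  next
    case (Cons l ws)
    let ?e = "evalw G h ws" and ?a = "lval G h l"
    have ka: "comm G k ?a \<in> N"
    proof (cases "snd l")
      case True
      have "comm G k ?a = h (fst l) \<otimes> inv (comm G k (h (fst l))) \<otimes> inv (h (fst l))"
        using True k by (simp add: lval_def comm_inv_right)
      then show ?thesis using Ngen[of "fst l"] kg[of "fst l"] Ni by (simp add: conjN_def)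
    next
      case False then show ?thesis using kg by (simp add: lval_def)
    qed
    have "comm G k (evalw G h (l # ws)) = comm G k ?e \<otimes> (inv ?e \<otimes> comm G k ?a \<otimes> ?e)"
      using k by (simp add: comm_mult_right)
    moreover have "inv ?e \<otimes> comm G k ?a \<otimes> ?e \<in> N" using A[of ws] ka by (simp add: conjN_def)
    ultimately show ?case using Cons Nm by simp
  qed
  define Q where "Q k \<longleftrightarrow> conjN N k \<and> (\<forall>ws. comm G k (evalw G h ws) \<in> N)" for k
  have Q1: "Q \<one>" using N1 Nc by (auto simp: Q_def conjN_def comm_def)
  have Qm: "Q (k1 \<otimes> k2)" if "Q k1" "Q k2" for k1 k2
  proof -
    have c: "k1 \<in> carrier G" "k2 \<in> carrier G" "conjN N k2" using that by (auto simp: Q_def conjN_def)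
    { fix ws
      have "comm G (k1 \<otimes> k2) (evalw G h ws) = inv k2 \<otimes> comm G k1 (evalw G h ws) \<otimes> k2 \<otimes> comm G k2 (evalw G h ws)"
        using c by (simp add: comm_mult_left)
      moreover have "inv k2 \<otimes> comm G k1 (evalw G h ws) \<otimes> k2 \<in> N"
        using that c(3) by (simp add: Q_def conjN_def)
      ultimately have "comm G (k1 \<otimes> k2) (evalw G h ws) \<in> N" using that Nm by (simp add: Q_def) }
    then show ?thesis using that conjN_mult[OF _ _ Nc] by (simp add: Q_def)
  qed
  have Qi: "Q (inv k)" if "Q k" for k
  proof -
    have c: "k \<in> carrier G" "conjN N k" using that by (auto simp: Q_def conjN_def)
    { fix ws
      have "comm G (inv k) (evalw G h ws) = k \<otimes> inv (comm G k (evalw G h ws)) \<otimes> inv k"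
        using c by (simp add: comm_inv_left)
      then have "comm G (inv k) (evalw G h ws) \<in> N" using that c Ni by (simp add: Q_def conjN_def) }
    then show ?thesis using c conjN_inv by (simp add: Q_def)
  qed
  have Qc: "Q (evalw G h vs \<otimes> k \<otimes> inv (evalw G h vs))" if "Q k" for k vs
  proof -
    let ?f = "evalw G h vs"
    have c: "k \<in> carrier G" "conjN N k" using that by (auto simp: Q_def conjN_def)
    { fix ws
      have "comm G (?f \<otimes> k \<otimes> inv ?f) (evalw G h ws) = ?f \<otimes> comm G k (inv ?f \<otimes> evalw G h ws \<otimes> ?f) \<otimes> inv ?f"
        using c by (simp add: comm_conj_left)
      moreover have "inv ?f \<otimes> evalw G h ws \<otimes> ?f = evalw G h (rev (map inv_letter vs) @ ws @ vs)"
        by (simp add: evalw_append evalw_rinv m_assoc)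
      ultimately have "comm G (?f \<otimes> k \<otimes> inv ?f) (evalw G h ws) \<in> N"
        using that A[of vs] by (simp add: Q_def conjN_def)
      }
    then show ?thesis using c conjN_mult[OF _ _ Nc] conjN_inv A
      by (simp add: Q_def)
  qed
  have Qrel: "Q (evalw G h \<rho>)" if "\<rho> \<in> UT_relators n m" for \<rho>
    using A B[OF evalw_closed H2[OF that]] by (simp add: Q_def)
  have R: "y \<in> carrier (free_group n) \<and> Q (evalw G h y)" if "y \<in> UT_R n m" for y
    using that unfolding UT_R_def normal_closure_def
  proof (induction rule: generate.induct)
    case one then show ?case using Q1 by (simp add: free_group_def)
  next
    case (incl y)
    then obtain g r where g: "g \<in> carrier (free_group n)" and r: "r \<in> UT_relators n m"
      and y: "y = g \<otimes>\<^bsub>free_group n\<^esub> r \<otimes>\<^bsub>free_group n\<^esub> inv\<^bsub>free_group n\<^esub> g" by auto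
    have rc: "r \<in> carrier (free_group n)" using r relators_carrier by auto
    have "evalw G h y = evalw G h g \<otimes> evalw G h r \<otimes> inv (evalw G h g)"
      using g rc by (simp add: y evalw_mult evalw_inv)
    then show ?case using Qc[OF Qrel[OF r]] g rc y by simp
  next
    case (inv y)
    then obtain g r where g: "g \<in> carrier (free_group n)" and r: "r \<in> UT_relators n m"
      and y: "y = g \<otimes>\<^bsub>free_group n\<^esub> r \<otimes>\<^bsub>free_group n\<^esub> inv\<^bsub>free_group n\<^esub> g" by auto
    have rc: "r \<in> carrier (free_group n)" using r relators_carrier by auto
    have yc: "y \<in> carrier (free_group n)" using g rc y by simp
    have "evalw G h y = evalw G h g \<otimes> evalw G h r \<otimes> inv (evalw G h g)"
      using g rc by (simp add: y evalw_mult evalw_inv)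
    then show ?case using Qi[OF Qc[OF Qrel[OF r]]] yc by (simp add: evalw_inv)
  next
    case (eng y1 y2)
    then show ?case using Qm by (simp add: evalw_mult)
  qed
  show ?thesis using x unfolding comm_subgroup_def
  proof (induction rule: generate.induct)
    case one then show ?case using N1 by (simp add: free_group_def)
  next
    case (incl y)
    then obtain r f where r: "r \<in> UT_R n m" and f: "f \<in> carrier (free_group n)"
      and y: "y = comm (free_group n) r f" by auto
    have "evalw G h y = comm G (evalw G h r) (evalw G h f)"
      using R[OF r] f by (simp add: y evalw_comm)
    moreover obtain fs where "evalw G h f = evalw G h fs" by blast
    ultimately show ?case using R[OF r] by (simp add: Q_def)
  next
    case (inv y)
    then obtain r f where r: "r \<in> UT_R n m" and f: "f \<in> carrier (free_group n)"
      and y: "y = comm (free_group n) r f" by auto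
    have rc: "r \<in> carrier (free_group n)" using R[OF r] by simp
    have "evalw G h y = comm G (evalw G h r) (evalw G h f)"
      using rc f by (simp add: y evalw_comm)
    moreover have "y \<in> carrier (free_group n)" using rc f by (simp add: y comm_def)
    ultimately show ?case using R[OF r] Ni by (simp add: Q_def evalw_inv)
  next
    case (eng y1 y2)
    then show ?case using Nm by (simp add: evalw_mult)
  qed
qed


lemma list_prod_evalw: "evalw G h (list_prod (free_group n) xs) = list_prod G (map (evalw G h) xs)"
  by (induction xs) (simp_all add: list_prod_def evalw_mult, simp add: free_group_def)

lemma F_comm_closed: "x \<in> carrier (free_group n) \<Longrightarrow> y \<in> carrier (free_group n) \<Longrightarrow>
   comm (free_group n) x y \<in> carrier (free_group n)"
  using free_group_group by (simp add: comm_def group.inv_closed monoid.m_closed group.is_monoid)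

lemma F_mult_closed: "x \<in> carrier (free_group n) \<Longrightarrow> y \<in> carrier (free_group n) \<Longrightarrow>
   x \<otimes>\<^bsub>free_group n\<^esub> y \<in> carrier (free_group n)"
  using free_group_group by (simp add: monoid.m_closed group.is_monoid)

lemma F_inv_closed: "x \<in> carrier (free_group n) \<Longrightarrow> inv\<^bsub>free_group n\<^esub> x \<in> carrier (free_group n)"
  using free_group_group by (simp add: group.inv_closed)

lemma gen_carrier': "1 \<le> i \<Longrightarrow> i < n \<Longrightarrow> gen i \<in> carrier (free_group n)"
  by (simp add: gen_carrier)

lemma ev1: "1 \<le> i \<Longrightarrow> i < n \<Longrightarrow> 1 \<le> j \<Longrightarrow> j < n \<Longrightarrow>
   evalw G h (comm (free_group n) (gen i) (gen j) [^]\<^bsub>free_group n\<^esub> (z::int)) = comm G (h i) (h j) [^] z"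
  by (simp add: evalw_ipow evalw_comm F_comm_closed gen_carrier')

lemma ev2: "1 \<le> i \<Longrightarrow> i + 1 < n \<Longrightarrow>
   evalw G h (comm (free_group n) (comm (free_group n) (gen i) (gen (i+1))) (gen i) [^]\<^bsub>free_group n\<^esub> (z::int))
   = comm G (comm G (h i) (h (i+1))) (h i) [^] z"
  by (simp add: evalw_ipow evalw_comm F_comm_closed gen_carrier')

lemma ev3: "1 \<le> i \<Longrightarrow> i + 1 < n \<Longrightarrow>
   evalw G h (comm (free_group n) (comm (free_group n) (gen i) (gen (i+1)))
      (gen i \<otimes>\<^bsub>free_group n\<^esub> inv\<^bsub>free_group n\<^esub> (gen (i+1))) [^]\<^bsub>free_group n\<^esub> (z::int))
   = comm G (comm G (h i) (h (i+1))) (h i \<otimes> inv (h (i+1))) [^] z"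
  by (simp add: evalw_ipow evalw_comm F_comm_closed gen_carrier' F_mult_closed F_inv_closed evalw_mult evalw_inv)

lemma ev4: "1 \<le> i \<Longrightarrow> i + 2 < n \<Longrightarrow>
   evalw G h (comm (free_group n) (comm (free_group n) (gen i) (gen (i+1)))
      (comm (free_group n) (gen (i+1)) (gen (i+2))) [^]\<^bsub>free_group n\<^esub> (z::int))
   = comm G (comm G (h i) (h (i+1))) (comm G (h (i+1)) (h (i+2))) [^] z"
  by (simp add: evalw_ipow evalw_comm F_comm_closed gen_carrier')

lemma eval_w: "evalw G h (w_elem n a b c d) =
     list_prod G [comm G (h i) (h j) [^] a i j. i \<leftarrow> [1..<n], j \<leftarrow> [i+2..<n]]
   \<otimes> list_prod G [comm G (comm G (h i) (h (i+1))) (h i) [^] b i. i \<leftarrow> [1..<n-1]]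
   \<otimes> list_prod G [comm G (comm G (h i) (h (i+1))) (h i \<otimes> inv (h (i+1))) [^] c i. i \<leftarrow> [1..<n-1]]
   \<otimes> list_prod G [comm G (comm G (h i) (h (i+1))) (comm G (h (i+1)) (h (i+2))) [^] d i. i \<leftarrow> [1..<n-2]]"
proof -
  let ?F = "free_group n"
  have e1: "map (evalw G h) [comm ?F (gen i) (gen j) [^]\<^bsub>?F\<^esub> a i j. i \<leftarrow> [1..<n], j \<leftarrow> [i+2..<n]]
      = [comm G (h i) (h j) [^] a i j. i \<leftarrow> [1..<n], j \<leftarrow> [i+2..<n]]"
    apply (simp only: map_concat map_map comp_def)
    apply (rule arg_cong[where f=concat])
    apply (rule map_cong[OF refl])
    apply (rule map_cong[OF refl])
    apply (simp add: ev1)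
    done
  have e2: "map (evalw G h) [comm ?F (comm ?F (gen i) (gen (i+1))) (gen i) [^]\<^bsub>?F\<^esub> b i. i \<leftarrow> [1..<n-1]]
      = [comm G (comm G (h i) (h (i+1))) (h i) [^] b i. i \<leftarrow> [1..<n-1]]"
    unfolding map_map comp_def by (rule map_cong[OF refl], rule ev2) auto
  have e3: "map (evalw G h) [comm ?F (comm ?F (gen i) (gen (i+1))) (gen i \<otimes>\<^bsub>?F\<^esub> inv\<^bsub>?F\<^esub> (gen (i+1))) [^]\<^bsub>?F\<^esub> c i. i \<leftarrow> [1..<n-1]]
      = [comm G (comm G (h i) (h (i+1))) (h i \<otimes> inv (h (i+1))) [^] c i. i \<leftarrow> [1..<n-1]]"
    unfolding map_map comp_def by (rule map_cong[OF refl], rule ev3) auto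
  have e4: "map (evalw G h) [comm ?F (comm ?F (gen i) (gen (i+1))) (comm ?F (gen (i+1)) (gen (i+2))) [^]\<^bsub>?F\<^esub> d i. i \<leftarrow> [1..<n-2]]
      = [comm G (comm G (h i) (h (i+1))) (comm G (h (i+1)) (h (i+2))) [^] d i. i \<leftarrow> [1..<n-2]]"
    unfolding map_map comp_def by (rule map_cong[OF refl], rule ev4) auto
  show ?thesis
    unfolding w_elem_def Let_def evalw_mult list_prod_evalw e1 e2 e3 e4 ..
qed

lemma iota_pow:
  fixes \<iota> :: "int \<Rightarrow> 'a"
  assumes add: "\<And>x y. \<iota> (x + y) = \<iota> x \<otimes> \<iota> y" and cl: "\<And>x. \<iota> x \<in> carrier G"
  shows "\<iota> x [^] (z::int) = \<iota> (z * x)"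
proof -
  have i0: "\<iota> 0 = \<one>"
    using add[of 0 0] cl[of 0] by (metis add_0 l_cancel_one')
  have np: "\<iota> x [^] (k::nat) = \<iota> (of_nat k * x)" for k
    by (induction k) (simp_all add: i0 add[symmetric] algebra_simps)
  have ineg: "inv (\<iota> y) = \<iota> (- y)" for y
    using add[of "-y" y] i0 cl by (simp add: inv_equality)
  show ?thesis
    by (cases "z < 0") (simp_all add: int_pow_def2 np ineg)
qed

lemma iota_list_prod:
  fixes \<iota> :: "'c::monoid_add \<Rightarrow> 'a"
  assumes add: "\<And>x y. \<iota> (x + y) = \<iota> x \<otimes> \<iota> y" and cl: "\<And>x. \<iota> x \<in> carrier G"
  shows "list_prod G (map \<iota> xs) = \<iota> (sum_list xs)"
proof -
  have i0: "\<iota> 0 = \<one>"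
    using add[of 0 0] cl[of 0] by (metis add_0 l_cancel_one')
  show ?thesis by (induction xs) (simp_all add: list_prod_def i0 add)
qed


lemma wprod_iota:
  fixes \<iota> :: "'c::monoid_add \<Rightarrow> 'a"
  assumes add: "\<And>x y. \<iota> (x + y) = \<iota> x \<otimes> \<iota> y" and cl: "\<And>x. \<iota> x \<in> carrier G"
  and A1: "\<And>k l. 1 \<le> k \<Longrightarrow> k + 2 \<le> l \<Longrightarrow> l < n \<Longrightarrow> comm G (h k) (h l) [^] a k l = \<iota> (fa k l)"
  and A2: "\<And>k. 1 \<le> k \<Longrightarrow> k + 1 < n \<Longrightarrow> comm G (comm G (h k) (h (k+1))) (h k) [^] b k = \<iota> (fb k)"
  and A3: "\<And>k. 1 \<le> k \<Longrightarrow> k + 1 < n \<Longrightarrow> comm G (comm G (h k) (h (k+1))) (h k \<otimes> inv (h (k+1))) [^] c k = \<iota> (fc k)"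
  and A4: "\<And>k. 1 \<le> k \<Longrightarrow> k + 2 < n \<Longrightarrow> comm G (comm G (h k) (h (k+1))) (comm G (h (k+1)) (h (k+2))) [^] d k = \<iota> (fd k)"
  shows "evalw G h (w_elem n a b c d) = \<iota> (sum_list [fa k l. k \<leftarrow> [1..<n], l \<leftarrow> [k+2..<n]]
     + sum_list (map fb [1..<n-1]) + sum_list (map fc [1..<n-1]) + sum_list (map fd [1..<n-2]))"
proof -
  have LP: "list_prod G (map \<iota> xs) = \<iota> (sum_list xs)" for xs
    by (rule iota_list_prod[OF add cl])
  have e1: "[comm G (h i) (h j) [^] a i j. i \<leftarrow> [1..<n], j \<leftarrow> [i+2..<n]]
      = map \<iota> [fa k l. k \<leftarrow> [1..<n], l \<leftarrow> [k+2..<n]]"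
    apply (simp only: map_concat map_map comp_def)
    apply (rule arg_cong[where f=concat])
    apply (rule map_cong[OF refl])
    apply (rule map_cong[OF refl])
    apply (rule A1; simp)
    done
  have e2: "[comm G (comm G (h i) (h (i+1))) (h i) [^] b i. i \<leftarrow> [1..<n-1]] = map \<iota> (map fb [1..<n-1])"
    unfolding map_map comp_def by (rule map_cong[OF refl], rule A2) auto
  have e3: "[comm G (comm G (h i) (h (i+1))) (h i \<otimes> inv (h (i+1))) [^] c i. i \<leftarrow> [1..<n-1]] = map \<iota> (map fc [1..<n-1])"
    unfolding map_map comp_def by (rule map_cong[OF refl], rule A3) auto
  have e4: "[comm G (comm G (h i) (h (i+1))) (comm G (h (i+1)) (h (i+2))) [^] d i. i \<leftarrow> [1..<n-2]] = map \<iota> (map fd [1..<n-2])"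
    unfolding map_map comp_def by (rule map_cong[OF refl], rule A4) auto
  show ?thesis unfolding eval_w e1 e2 e3 e4 LP add ..
qed


lemma comm_one_left[simp]: "g \<in> carrier G \<Longrightarrow> comm G \<one> g = \<one>"
  by (simp add: comm_def)
lemma comm_one_right[simp]: "g \<in> carrier G \<Longrightarrow> comm G g \<one> = \<one>"
  by (simp add: comm_def)

lemma eval_rel_cases:
  assumes "\<rho> \<in> UT_relators n m"
  shows "(\<exists>k. 1 \<le> k \<and> k < n \<and> evalw G h \<rho> = h k [^] m) \<or>
  (\<exists>k l. 1 \<le> k \<and> k + 2 \<le> l \<and> l < n \<and> evalw G h \<rho> = comm G (h k) (h l)) \<or>
  (\<exists>k. 1 \<le> k \<and> k + 1 < n \<and> evalw G h \<rho> = comm G (comm G (h k) (h (k+1))) (h k)) \<or>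
  (\<exists>k. 1 \<le> k \<and> k + 1 < n \<and> evalw G h \<rho> = comm G (comm G (h k) (h (k+1))) (h (k+1))) \<or>
  (\<exists>k. 1 \<le> k \<and> k + 2 < n \<and> evalw G h \<rho> = comm G (comm G (h k) (h (k+1))) (comm G (h (k+1)) (h (k+2))))"
proof -
  let ?F = "free_group n"
  from assms consider
      (p) k where "1 \<le> k" "k \<le> n - 1" "\<rho> = gen k [^]\<^bsub>?F\<^esub> m"
    | (c) k l where "1 \<le> k" "k < l - 1" "l - 1 \<le> n - 2" "\<rho> = comm ?F (gen k) (gen l)"
    | (t1) k where "1 \<le> k" "k \<le> n - 2" "\<rho> = comm ?F (comm ?F (gen k) (gen (k+1))) (gen k)"
    | (t2) k where "1 \<le> k" "k \<le> n - 2" "\<rho> = comm ?F (comm ?F (gen k) (gen (k+1))) (gen (k+1))"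
    | (t3) k where "1 \<le> k" "k \<le> n - 3" "\<rho> = comm ?F (comm ?F (gen k) (gen (k+1))) (comm ?F (gen (k+1)) (gen (k+2)))"
    unfolding UT_relators_def Let_def by blast
  then show ?thesis
  proof cases
    case p
    then have "evalw G h \<rho> = h k [^] m" by (simp add: evalw_npow gen_carrier)
    then show ?thesis using p by auto
  next
    case c
    then have "evalw G h \<rho> = comm G (h k) (h l)" by (simp add: evalw_comm gen_carrier')
    then show ?thesis using c by (intro disjI2 disjI1 exI[of _ k] exI[of _ l]) auto
  next
    case t1
    then have "evalw G h \<rho> = comm G (comm G (h k) (h (k+1))) (h k)"
      by (simp add: evalw_comm gen_carrier' F_comm_closed)
    then show ?thesis using t1 by (intro disjI2 disjI1 exI[of _ k]) auto
  next
    case t2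
    then have "evalw G h \<rho> = comm G (comm G (h k) (h (k+1))) (h (k+1))"
      by (simp add: evalw_comm gen_carrier' F_comm_closed)
    then show ?thesis using t2 by (intro disjI2 disjI1 exI[of _ k]) auto
  next
    case t3
    then have "evalw G h \<rho> = comm G (comm G (h k) (h (k+1))) (comm G (h (k+1)) (h (k+2)))"
      by (simp add: evalw_comm gen_carrier' F_comm_closed)
    then show ?thesis using t3 by (intro disjI2 exI[of _ k]) auto
  qed
qed

end

lemma sum_list_if_eq:
  fixes f :: "nat \<Rightarrow> 'c::monoid_add"
  shows "distinct xs \<Longrightarrow> sum_list (map (\<lambda>k. if k = kz then f k else 0) xs) = (if kz \<in> set xs then f kz else 0)"
proof (induction xs)
  case (Cons x xs)
  then show ?case
  proof (cases "x = kz")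
    case True
    then have "sum_list (map (\<lambda>k. if k = kz then f k else 0) xs) = 0"
      using Cons by simp
    then show ?thesis using True by simp
  qed simp
qed simp

lemma sum_list_zero_map: "sum_list (map (\<lambda>k. (0::'c::monoid_add)) xs) = 0"
  by (induction xs) simp_all

lemma sum_list_concat': "sum_list (concat xss) = sum_list (map sum_list xss)"
  by (induction xss) simp_all

lemma sum_double_if:
  fixes f :: "nat \<Rightarrow> nat \<Rightarrow> 'c::monoid_add"
  assumes "1 \<le> i" "i + 2 \<le> j" "j < n"
  shows "sum_list [if k = i \<and> l = j then f k l else 0. k \<leftarrow> [1..<n], l \<leftarrow> [k+2..<n]] = f i j"
proof -
  have "map (\<lambda>k. sum_list (map (\<lambda>l. if k = i \<and> l = j then f k l else 0) [k+2..<n])) [1..<n]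
      = map (\<lambda>k. if k = i then f i j else 0) [1..<n]"
  proof (rule map_cong[OF refl])
    fix k assume "k \<in> set [1..<n]"
    show "sum_list (map (\<lambda>l. if k = i \<and> l = j then f k l else 0) [k+2..<n]) = (if k = i then f i j else 0)"
    proof (cases "k = i")
      case True
      then show ?thesis unfolding True using sum_list_if_eq[where xs="[i+2..<n]" and f="f i" and kz=j] assms by (simp del: upt_Suc)
    next
      case False
      then show ?thesis using sum_list_zero_map by simp
    qed
  qed
  note M = this
  have "sum_list [if k = i \<and> l = j then f k l else 0. k \<leftarrow> [1..<n], l \<leftarrow> [k+2..<n]]
     = sum_list (map (\<lambda>k. sum_list (map (\<lambda>l. if k = i \<and> l = j then f k l else 0) [k+2..<n])) [1..<n])"
    unfolding sum_list_concat' map_map comp_def ..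
  also have "\<dots> = sum_list (map (\<lambda>k. if k = i then f i j else 0) [1..<n])"
    unfolding M ..
  also have "\<dots> = f i j"
    using sum_list_if_eq[where xs="[1..<n]" and f="\<lambda>_. f i j" and kz=i] assms by (simp del: upt_Suc)
  finally show ?thesis .
qed



definition C2 :: "int \<Rightarrow> int" where "C2 x = x * (x - 1) div 2"

lemma even_C2_aux: "even (x * (x - 1 :: int))"
  by simp

lemma C2_times2: "2 * C2 x = x * (x - 1)"
  unfolding C2_def using even_C2_aux[of x] by simp

lemma C2_add: "C2 (x + y) = C2 x + C2 y + x * y"
proof -
  have "2 * C2 (x + y) = 2 * (C2 x + C2 y + x * y)"
    unfolding distrib_left C2_times2 by (simp add: algebra_simps)
  then show ?thesis by simp
qed

lemma C2_0[simp]: "C2 0 = 0" and C2_1[simp]: "C2 1 = 0" and C2_m1[simp]: "C2 (-1) = 1"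
  by (simp_all add: C2_def)

lemma C2_neg: "C2 (- x) = C2 x + x"
proof -
  have "2 * C2 (- x) = 2 * (C2 x + x)"
    using C2_times2[of "-x"] C2_times2[of x] by (simp add: algebra_simps)
  then show ?thesis by simp
qed

type_synonym e5 = "int \<times> int \<times> int \<times> int \<times> int"

fun law5 :: "e5 \<Rightarrow> e5 \<Rightarrow> e5" where
  "law5 (a, b, c, d, e) (a', b', c', d', e') =
     (a + a', b + b', c + c' - a' * b, d + d' + c * a' - b * C2 a', e + e' - a' * C2 b + (c - a' * b) * b')"

fun inv5 :: "e5 \<Rightarrow> e5" where
  "inv5 (a, b, c, d, e) = (- a, - b, - c - a * b, - d + (c + a * b) * a - b * C2 a, - e + a * C2 (- b) + c * b)"

definition G5 :: "e5 monoid" where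
  "G5 = \<lparr>carrier = UNIV, monoid.mult = law5, one = (0, 0, 0, 0, 0)\<rparr>"

lemma G5_mult[simp]: "x \<otimes>\<^bsub>G5\<^esub> y = law5 x y" and G5_one[simp]: "\<one>\<^bsub>G5\<^esub> = (0,0,0,0,0)"
  and G5_carrier[simp]: "carrier G5 = UNIV"
  by (simp_all add: G5_def)

lemma law5_assoc: "law5 (law5 x y) z = law5 x (law5 y z)"
  by (cases x; cases y; cases z) (simp add: C2_add algebra_simps)

lemma inv5_l: "law5 (inv5 x) x = (0, 0, 0, 0, 0)"
  by (cases x) (simp add: C2_neg algebra_simps)

lemma group_G5: "group G5"
proof (rule groupI)
  fix x :: e5
  show "\<exists>y\<in>carrier G5. y \<otimes>\<^bsub>G5\<^esub> x = \<one>\<^bsub>G5\<^esub>"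
    by (rule bexI[of _ "inv5 x"]) (simp_all add: inv5_l)
qed (auto simp: law5_assoc)

lemma inv_G5[simp]: "inv\<^bsub>G5\<^esub> x = inv5 x"
  by (rule group.inv_equality[OF group_G5]) (simp_all add: inv5_l)



lemma evalctx_G5: "evalctx G5 h"
  by (rule evalctx.intro[OF group_G5]) (simp add: evalctx_axioms_def)

lemma pow5_x: "(1, 0, 0, 0, 0) [^]\<^bsub>G5\<^esub> (k::nat) = (int k, 0, 0, 0, 0)"
  by (induction k) (simp_all add: algebra_simps)

lemma pow5_y: "(0, 1, 0, 0, 0) [^]\<^bsub>G5\<^esub> (k::nat) = (0, int k, 0, 0, 0)"
  by (induction k) (simp_all add: algebra_simps)

lemma pow5_1: "(0, 0, 0, 0, 0) [^]\<^bsub>G5\<^esub> (k::nat) = (0, 0, 0, 0, 0)"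
  by (induction k) simp_all

lemma ipow5_1: "(0, 0, 0, 0, 0) [^]\<^bsub>G5\<^esub> (k::int) = (0, 0, 0, 0, 0)"
  using group.int_pow_one[OF group_G5] by simp

definition hA :: "nat \<Rightarrow> nat \<Rightarrow> nat \<Rightarrow> e5" where
  "hA i j k = (if k = i then (1, 0, 0, 0, 0) else if k = j then (0, 1, 0, 0, 0) else (0, 0, 0, 0, 0))"

definition NA :: "nat \<Rightarrow> e5 set" where
  "NA m = {(a, b, c, d, e). a = 0 \<and> b = 0 \<and> int m dvd c}"

lemma NA_sub: "subgroup (NA m) G5"
proof (rule group.subgroupI[OF group_G5])
  show "NA m \<noteq> {}" by (auto simp: NA_def intro!: exI[of _ "(0,0,0,0,0)"])
qed (auto simp: NA_def)

lemma hA_adj: "i + 2 \<le> j \<Longrightarrow> comm G5 (hA i j k) (hA i j (Suc k)) = (0, 0, 0, 0, 0)"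
  by (auto simp: hA_def comm_def)

lemma comm5_1l[simp]: "comm G5 (0, 0, 0, 0, 0) g = (0, 0, 0, 0, 0)"
  by (cases g) (simp add: comm_def algebra_simps)

lemma hA_comm: "i + 2 \<le> j \<Longrightarrow> k + 2 \<le> l \<Longrightarrow>
  comm G5 (hA i j k) (hA i j l) = (if k = i \<and> l = j then (0, 0, 1, 0, 0) else (0, 0, 0, 0, 0))"
  by (auto simp: hA_def comm_def)

lemma A_main:
  assumes ij: "1 \<le> i" "i + 2 \<le> j" "j < n"
    and w: "w_elem n a b c d \<in> comm_subgroup (free_group n) (UT_R n m) (carrier (free_group n))"
  shows "int m dvd a i j"
proof -
  interpret E: evalctx G5 "hA i j" by (rule evalctx_G5)
  let ?\<iota> = "\<lambda>z::int. (0::int, 0::int, z, 0::int, 0::int)"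
  have H1: "hA i j l \<otimes>\<^bsub>G5\<^esub> x \<otimes>\<^bsub>G5\<^esub> inv\<^bsub>G5\<^esub> (hA i j l) \<in> NA m \<and>
            inv\<^bsub>G5\<^esub> (hA i j l) \<otimes>\<^bsub>G5\<^esub> x \<otimes>\<^bsub>G5\<^esub> hA i j l \<in> NA m" if "x \<in> NA m" for l x
    using that by (auto simp: hA_def NA_def)
  have H2: "comm G5 (evalw G5 (hA i j) \<rho>) (hA i j l) \<in> NA m" if "\<rho> \<in> UT_relators n m" for \<rho> l
  proof -
    from E.eval_rel_cases[OF that] show ?thesis
    proof (elim disjE exE conjE)
      fix k assume "evalw G5 (hA i j) \<rho> = hA i j k [^]\<^bsub>G5\<^esub> m"
      then show ?thesis using ij
        by (auto simp: hA_def pow5_x pow5_y pow5_1 comm_def NA_def)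
    next
      fix k l' assume "k + 2 \<le> l'" "evalw G5 (hA i j) \<rho> = comm G5 (hA i j k) (hA i j l')"
      then show ?thesis using ij by (auto simp: hA_comm hA_def comm_def NA_def)
    next
      fix k assume "evalw G5 (hA i j) \<rho> = comm G5 (comm G5 (hA i j k) (hA i j (k + 1))) (hA i j k)"
      then show ?thesis using ij by (simp add: hA_adj NA_def)
    next
      fix k assume "evalw G5 (hA i j) \<rho> = comm G5 (comm G5 (hA i j k) (hA i j (k + 1))) (hA i j (k + 1))"
      then show ?thesis using ij by (simp add: hA_adj NA_def)
    next
      fix k assume "evalw G5 (hA i j) \<rho> = comm G5 (comm G5 (hA i j k) (hA i j (k + 1))) (comm G5 (hA i j (k + 1)) (hA i j (k + 2)))"
      then show ?thesis using ij by (simp add: hA_adj NA_def)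
    qed
  qed
  have inN: "evalw G5 (hA i j) (w_elem n a b c d) \<in> NA m"
    by (rule E.generic[OF NA_sub H1 H2 w])
  have add: "?\<iota> (x + y) = ?\<iota> x \<otimes>\<^bsub>G5\<^esub> ?\<iota> y" for x y by simp
  have cl: "?\<iota> x \<in> carrier G5" for x by simp
  have ipw: "(0::int, 0::int, 1::int, 0::int, 0::int) [^]\<^bsub>G5\<^esub> (z::int) = (0, 0, z, 0, 0)" for z
    using E.iota_pow[of ?\<iota>, OF add cl, of 1 z] by simp
  have "evalw G5 (hA i j) (w_elem n a b c d) = ?\<iota> (sum_list [(if k = i \<and> l = j then a k l else 0). k \<leftarrow> [1..<n], l \<leftarrow> [k+2..<n]]
     + sum_list (map (\<lambda>_. 0) [1..<n-1]) + sum_list (map (\<lambda>_. 0) [1..<n-1]) + sum_list (map (\<lambda>_. 0) [1..<n-2]))"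
  proof (rule E.wprod_iota[of ?\<iota>, OF add cl])
    fix k l assume "1 \<le> k" "k + 2 \<le> l" "l < n"
    then show "comm G5 (hA i j k) (hA i j l) [^]\<^bsub>G5\<^esub> a k l = ?\<iota> (if k = i \<and> l = j then a k l else 0)"
      using ij by (simp add: hA_comm ipw ipow5_1)
  qed (use ij in \<open>simp_all add: hA_adj ipow5_1\<close>)
  also have "\<dots> = ?\<iota> (a i j)"
    using sum_double_if[OF ij] by (simp add: sum_list_zero_map)
  finally show ?thesis using inN by (simp add: NA_def)
qed



definition hB :: "nat \<Rightarrow> nat \<Rightarrow> e5" where
  "hB i k = (if k = i then (1, 0, 0, 0, 0) else if k = Suc i then (0, 1, 0, 0, 0) else (0, 0, 0, 0, 0))"

definition NB :: "nat \<Rightarrow> e5 set" where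
  "NB m = {(a, b, c, d, e). a = 0 \<and> b = 0 \<and> (\<exists>\<alpha> \<beta>. c = (\<alpha> + \<beta>) * int m \<and>
      int m dvd d - \<alpha> * C2 (int m) \<and> int m dvd e - \<beta> * C2 (int m))}"

lemma NB_0: "(0, 0, 0, 0, 0) \<in> NB m"
  by (auto simp: NB_def intro!: exI[of _ 0])

lemma NB_memE: "x \<in> NB m \<Longrightarrow> \<exists>c d e \<alpha> \<beta>. x = (0,0,c,d,e) \<and> c = (\<alpha> + \<beta>) * int m \<and>
     int m dvd d - \<alpha> * C2 (int m) \<and> int m dvd e - \<beta> * C2 (int m)"
  by (cases x) (auto simp: NB_def)

lemma NB_memI: "c = (\<alpha> + \<beta>) * int m \<Longrightarrow> int m dvd d - \<alpha> * C2 (int m) \<Longrightarrow> int m dvd e - \<beta> * C2 (int m)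
   \<Longrightarrow> (0, 0, c, d, e) \<in> NB m"
  by (auto simp: NB_def)

lemma NB_sub: "subgroup (NB m) G5"
proof (rule group.subgroupI[OF group_G5])
  show "NB m \<noteq> {}" using NB_0 by blast
  fix x assume "x \<in> NB m"
  then obtain c d e \<alpha> \<beta> where x: "x = (0,0,c,d,e)" "c = (\<alpha> + \<beta>) * int m"
     "int m dvd d - \<alpha> * C2 (int m)" "int m dvd e - \<beta> * C2 (int m)"
    using NB_memE by blast
  have "inv\<^bsub>G5\<^esub> x = (0, 0, - c, - d, - e)" using x by simp
  moreover have f: "- c = (- \<alpha> + - \<beta>) * int m" "int m dvd - d - (- \<alpha>) * C2 (int m)"
     "int m dvd - e - (- \<beta>) * C2 (int m)"
  proof -
    show "- c = (- \<alpha> + - \<beta>) * int m" using x by (simp add: algebra_simps)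
    have "int m dvd - (d - \<alpha> * C2 (int m))" using x(3) by (simp only: dvd_minus_iff)
    then show "int m dvd - d - (- \<alpha>) * C2 (int m)" by (simp add: algebra_simps)
    have "int m dvd - (e - \<beta> * C2 (int m))" using x(4) by (simp only: dvd_minus_iff)
    then show "int m dvd - e - (- \<beta>) * C2 (int m)" by (simp add: algebra_simps)
  qed
  moreover note NB_memI[OF f]
  ultimately show "inv\<^bsub>G5\<^esub> x \<in> NB m" by simp
next
  fix x y assume "x \<in> NB m" "y \<in> NB m"
  then obtain c d e \<alpha> \<beta> c' d' e' \<alpha>' \<beta>' where x: "x = (0,0,c,d,e)" "c = (\<alpha> + \<beta>) * int m"
     "int m dvd d - \<alpha> * C2 (int m)" "int m dvd e - \<beta> * C2 (int m)"
    and y: "y = (0,0,c',d',e')" "c' = (\<alpha>' + \<beta>') * int m"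
     "int m dvd d' - \<alpha>' * C2 (int m)" "int m dvd e' - \<beta>' * C2 (int m)"
    using NB_memE by meson
  have "x \<otimes>\<^bsub>G5\<^esub> y = (0, 0, c + c', d + d', e + e')" using x y by simp
  moreover have "c + c' = ((\<alpha> + \<alpha>') + (\<beta> + \<beta>')) * int m"
    using x y by (simp add: algebra_simps)
  moreover have "int m dvd (d + d') - (\<alpha> + \<alpha>') * C2 (int m)"
    using dvd_add[OF x(3) y(3)] by (simp add: algebra_simps)
  moreover have "int m dvd (e + e') - (\<beta> + \<beta>') * C2 (int m)"
    using dvd_add[OF x(4) y(4)] by (simp add: algebra_simps)
  ultimately show "x \<otimes>\<^bsub>G5\<^esub> y \<in> NB m" using NB_memI by presburger
qed auto

lemma NB_shift:
  assumes "(0, 0, c, d, e) \<in> NB m"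
  shows "(0, 0, c, d + k * c, e + l * c) \<in> NB m"
proof -
  obtain \<alpha> \<beta> where x: "c = (\<alpha> + \<beta>) * int m"
     "int m dvd d - \<alpha> * C2 (int m)" "int m dvd e - \<beta> * C2 (int m)"
    using assms by (auto simp: NB_def)
  have "int m dvd (d - \<alpha> * C2 (int m)) + (k * (\<alpha> + \<beta>)) * int m"
    using x(2) by simp
  then have 2: "int m dvd (d + k * c) - \<alpha> * C2 (int m)"
    using x(1) by (simp add: algebra_simps)
  have "int m dvd (e - \<beta> * C2 (int m)) + (l * (\<alpha> + \<beta>)) * int m"
    using x(3) by simp
  then have 3: "int m dvd (e + l * c) - \<beta> * C2 (int m)"
    using x(1) by (simp add: algebra_simps)
  show ?thesis unfolding NB_def using x(1) 2 3 by blast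
qed

lemma hB_far: "k + 2 \<le> l \<Longrightarrow> comm G5 (hB i k) (hB i l) = (0, 0, 0, 0, 0)"
  by (auto simp: hB_def comm_def)

lemma hB_adj: "k \<noteq> i \<Longrightarrow> comm G5 (hB i k) (hB i (Suc k)) = (0, 0, 0, 0, 0)"
  by (auto simp: hB_def comm_def)

lemma hB_t: "comm G5 (hB i i) (hB i (Suc i)) = (0, 0, 1, 0, 0)"
  by (simp add: hB_def comm_def)

lemma comm5_1r[simp]: "comm G5 g (0, 0, 0, 0, 0) = (0, 0, 0, 0, 0)"
  by (cases g) (simp add: comm_def algebra_simps)

lemma C2_choose: "C2 (int m) = int (m choose 2)"
proof -
  have "int (m choose 2) = int (m * (m - 1)) div 2" by (simp add: choose_two zdiv_int)
  also have "int (m * (m - 1)) = int m * (int m - 1)" by (cases m) (simp_all add: algebra_simps)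
  finally show ?thesis by (simp add: C2_def)
qed

lemma hB_conj:
  assumes "x \<in> NB m"
  shows "hB i l \<otimes>\<^bsub>G5\<^esub> x \<otimes>\<^bsub>G5\<^esub> inv\<^bsub>G5\<^esub> (hB i l) \<in> NB m \<and>
         inv\<^bsub>G5\<^esub> (hB i l) \<otimes>\<^bsub>G5\<^esub> x \<otimes>\<^bsub>G5\<^esub> hB i l \<in> NB m"
proof -
  obtain c d e where x: "x = (0,0,c,d,e)" and xN: "(0,0,c,d,e) \<in> NB m"
    using assms NB_memE by blast
  have s: "(0, 0, c, d + k * c, e + l * c) \<in> NB m" for k l by (rule NB_shift[OF xN])
  show ?thesis
  proof (cases "l = i")
    case True
    then show ?thesis using s[of "-1" 0] s[of 1 0] by (simp add: x hB_def)
  next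
    case False
    show ?thesis
    proof (cases "l = Suc i")
      case True
      then show ?thesis using s[of 0 "-1"] s[of 0 1] by (simp add: x hB_def)
    next
      case False
      then show ?thesis using \<open>l \<noteq> i\<close> xN by (simp add: x hB_def)
    qed
  qed
qed

lemma C2_sq: "x + C2 x - x * x = - C2 x"
  using C2_times2[of x] by (simp add: algebra_simps)

lemma hB_pow_comm: "comm G5 (hB i k [^]\<^bsub>G5\<^esub> m) (hB i l) \<in> NB m"
proof -
  have m1: "(0, 0, int m, C2 (int m), 0) \<in> NB m" by (rule NB_memI[of _ 1 0]) simp_all
  have m2: "(0, 0, - int m, 0, - C2 (int m)) \<in> NB m" by (rule NB_memI[of _ 0 "-1"]) simp_all
  show ?thesis
    using m1 m2 NB_0 by (auto simp: hB_def pow5_x pow5_y pow5_1 comm_def C2_neg algebra_simps C2_sq)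
qed

lemma B_main:
  assumes i: "1 \<le> i" "i + 1 < n" and m: "m \<ge> 2"
    and w: "w_elem n a b c d \<in> comm_subgroup (free_group n) (UT_R n m) (carrier (free_group n))"
  shows "int m dvd b i \<and> int (gcd m (m choose 2)) dvd c i"
proof -
  interpret E: evalctx G5 "hB i" by (rule evalctx_G5)
  have H2: "comm G5 (evalw G5 (hB i) \<rho>) (hB i l) \<in> NB m" if "\<rho> \<in> UT_relators n m" for \<rho> l
  proof -
    from E.eval_rel_cases[OF that] show ?thesis
    proof (elim disjE exE conjE)
      fix k assume "evalw G5 (hB i) \<rho> = hB i k [^]\<^bsub>G5\<^esub> m"
      then show ?thesis using hB_pow_comm by simp
    next
      fix k l' assume "k + 2 \<le> l'" "evalw G5 (hB i) \<rho> = comm G5 (hB i k) (hB i l')"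
      then show ?thesis by (simp add: hB_far NB_0)
    next
      fix k assume "evalw G5 (hB i) \<rho> = comm G5 (comm G5 (hB i k) (hB i (k + 1))) (hB i k)"
      then show ?thesis
        by (cases "k = i") (auto simp: hB_adj hB_t NB_0, auto simp: hB_def comm_def NB_0)
    next
      fix k assume "evalw G5 (hB i) \<rho> = comm G5 (comm G5 (hB i k) (hB i (k + 1))) (hB i (k + 1))"
      then show ?thesis
        by (cases "k = i") (auto simp: hB_adj hB_t NB_0, auto simp: hB_def comm_def NB_0)
    next
      fix k assume "evalw G5 (hB i) \<rho> = comm G5 (comm G5 (hB i k) (hB i (k + 1))) (comm G5 (hB i (k + 1)) (hB i (k + 2)))"
      then show ?thesis
        by (cases "k = i") (simp_all add: hB_adj hB_t NB_0)
    qed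
  qed
  have inN: "evalw G5 (hB i) (w_elem n a b c d) \<in> NB m"
    by (rule E.generic[OF NB_sub hB_conj H2 w])
  let ?\<iota> = "\<lambda>p::int \<times> int. (0::int, 0::int, 0::int, fst p, snd p)"
  have add: "?\<iota> (x + y) = ?\<iota> x \<otimes>\<^bsub>G5\<^esub> ?\<iota> y" for x y by (cases x; cases y) simp
  have cl: "?\<iota> x \<in> carrier G5" for x by simp
  have upw: "(0::int, 0::int, 0::int, 1::int, 0::int) [^]\<^bsub>G5\<^esub> (z::int) = (0, 0, 0, z, 0)" for z
    using E.iota_pow[of "\<lambda>z. (0, 0, 0, z, 0)", of 1 z] by simp
  have cpw: "(0::int, 0::int, 0::int, 1::int, -1::int) [^]\<^bsub>G5\<^esub> (z::int) = (0, 0, 0, z, -z)" for z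
    using E.iota_pow[of "\<lambda>z. (0, 0, 0, z, -z)", of 1 z] by simp
  have "evalw G5 (hB i) (w_elem n a b c d) = ?\<iota> (sum_list [(0::int \<times> int). k \<leftarrow> [1..<n], l \<leftarrow> [k+2..<n]]
     + sum_list (map (\<lambda>k. if k = i then (b k, 0) else 0) [1..<n-1])
     + sum_list (map (\<lambda>k. if k = i then (c k, - c k) else 0) [1..<n-1]) + sum_list (map (\<lambda>_. 0) [1..<n-2]))"
  proof (rule E.wprod_iota[of ?\<iota>, OF add cl])
    fix k l assume "1 \<le> k" "k + 2 \<le> l" "l < n"
    then show "comm G5 (hB i k) (hB i l) [^]\<^bsub>G5\<^esub> a k l = ?\<iota> 0"
      by (simp add: hB_far ipow5_1)
  next
    fix k
    show "comm G5 (comm G5 (hB i k) (hB i (k + 1))) (hB i k) [^]\<^bsub>G5\<^esub> b k = ?\<iota> (if k = i then (b k, 0) else 0)"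
      by (cases "k = i") (simp_all add: hB_adj hB_t ipow5_1, simp add: hB_def comm_def upw)
  next
    fix k
    show "comm G5 (comm G5 (hB i k) (hB i (k + 1))) (hB i k \<otimes>\<^bsub>G5\<^esub> inv\<^bsub>G5\<^esub> (hB i (k + 1))) [^]\<^bsub>G5\<^esub> c k
        = ?\<iota> (if k = i then (c k, - c k) else 0)"
      by (cases "k = i") (simp_all add: hB_adj hB_t ipow5_1, simp add: hB_def comm_def cpw)
  next
    fix k
    show "comm G5 (comm G5 (hB i k) (hB i (k + 1))) (comm G5 (hB i (k + 1)) (hB i (k + 2))) [^]\<^bsub>G5\<^esub> d k = ?\<iota> 0"
      by (cases "k = i") (simp_all add: hB_adj hB_t ipow5_1)
  qed
  also have "\<dots> = ?\<iota> ((b i, 0) + (c i, - c i))"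
  proof -
    have iin: "i < n - Suc 0" using i by linarith
    have z1: "sum_list [(0::int \<times> int). k \<leftarrow> [1..<n], l \<leftarrow> [k+2..<n]] = 0"
      by (simp add: sum_list_concat' map_concat comp_def sum_list_zero_map)
    have z2: "sum_list (map (\<lambda>k. if k = i then (b k, 0) else 0) [1..<n-1]) = (b i, (0::int))"
      using sum_list_if_eq[where xs="[1..<n-1]" and f="\<lambda>k. (b k, 0::int)" and kz=i] i iin by (simp del: upt_Suc)
    have z3: "sum_list (map (\<lambda>k. if k = i then (c k, - c k) else 0) [1..<n-1]) = (c i, - c i)"
      using sum_list_if_eq[where xs="[1..<n-1]" and f="\<lambda>k. (c k, - c k)" and kz=i] i iin by (simp del: upt_Suc)
    show ?thesis unfolding z1 z2 z3 by (simp add: sum_list_zero_map)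
  qed
  finally have "(0, 0, 0, b i + c i, - c i) \<in> NB m" using inN by simp
  then obtain \<alpha> \<beta> where ab: "0 = (\<alpha> + \<beta>) * int m" and
    d1: "int m dvd (b i + c i) - \<alpha> * C2 (int m)" and d2: "int m dvd - c i - \<beta> * C2 (int m)"
    by (auto simp: NB_def)
  have "\<beta> = - \<alpha>" using ab m by simp
  then have d2': "int m dvd - c i + \<alpha> * C2 (int m)" using d2 by simp
  have "int m dvd ((b i + c i) - \<alpha> * C2 (int m)) + (- c i + \<alpha> * C2 (int m))"
    using d1 d2' by (rule dvd_add)
  then have bdiv: "int m dvd b i" by simp
  obtain q where q: "- c i + \<alpha> * C2 (int m) = int m * q" using d2' by blast
  have "c i = \<alpha> * C2 (int m) - int m * q" using q by simp
  moreover have "gcd (int m) (C2 (int m)) dvd \<alpha> * C2 (int m) - int m * q" by simp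
  ultimately have "gcd (int m) (C2 (int m)) dvd c i" by simp
  then show ?thesis using bdiv by (simp add: C2_choose)
qed



type_synonym u4 = "int \<times> int \<times> int \<times> int \<times> int \<times> int"

fun um4 :: "u4 \<Rightarrow> u4 \<Rightarrow> u4" where
  "um4 (p1, p2, p3, q1, q2, r) (p1', p2', p3', q1', q2', r') =
     (p1 + p1', p2 + p2', p3 + p3', q1 + q1' + p1 * p2', q2 + q2' + p2 * p3', r + r' + p1 * q2' + q1 * p3')"

fun uinv4 :: "u4 \<Rightarrow> u4" where
  "uinv4 (p1, p2, p3, q1, q2, r) =
     (- p1, - p2, - p3, - q1 + p1 * p2, - q2 + p2 * p3, - r + p1 * q2 + q1 * p3 - p1 * p2 * p3)"

fun fD :: "u4 \<Rightarrow> u4 \<Rightarrow> int" where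
  "fD (a12, a23, a34, a13, a24, a14) (b12, b23, b34, b13, b24, b14) =
     a13 * b24 + a23 * b14 + a23 * a13 * b34 + a12 * b24 + a12 * a23 * b24"

fun lawD :: "u4 \<times> bool \<Rightarrow> u4 \<times> bool \<Rightarrow> u4 \<times> bool" where
  "lawD (A, k) (B, k') = (um4 A B, (k \<noteq> k') \<noteq> odd (fD A B))"

definition GD :: "(u4 \<times> bool) monoid" where
  "GD = \<lparr>carrier = UNIV, monoid.mult = lawD, one = ((0, 0, 0, 0, 0, 0), False)\<rparr>"

lemma GD_mult[simp]: "x \<otimes>\<^bsub>GD\<^esub> y = lawD x y" and GD_one[simp]: "\<one>\<^bsub>GD\<^esub> = ((0,0,0,0,0,0), False)"
  and GD_carrier[simp]: "carrier GD = UNIV"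
  by (simp_all add: GD_def)

lemma um4_assoc: "um4 (um4 A B) C = um4 A (um4 B C)"
  by (cases A; cases B; cases C) (simp add: algebra_simps)

lemma fD_cocycle: "odd (fD A B) \<noteq> odd (fD (um4 A B) C) \<longleftrightarrow> odd (fD B C) \<noteq> odd (fD A (um4 B C))"
proof -
  obtain a12 a23 a34 a13 a24 a14 where A: "A = (a12, a23, a34, a13, a24, a14)" by (cases A) auto
  obtain b12 b23 b34 b13 b24 b14 where B: "B = (b12, b23, b34, b13, b24, b14)" by (cases B) auto
  obtain c12 c23 c34 c13 c24 c14 where C: "C = (c12, c23, c34, c13, c24, c14)" by (cases C) auto
  have eq: "fD A B + fD (um4 A B) C = fD B C + fD A (um4 B C) + a12 * c34 * (b23 * (b23 - 1)) + 2 * (a12 * b23 * c24)"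
    unfolding A B C by (simp add: algebra_simps)
  have ev: "even (a12 * c34 * (b23 * (b23 - 1)) + 2 * (a12 * b23 * c24))" by simp
  have "odd (fD A B + fD (um4 A B) C) = odd (fD B C + fD A (um4 B C))"
    unfolding eq using ev by simp
  then show ?thesis by simp
qed

lemma lawD_assoc: "lawD (lawD x y) z = lawD x (lawD y z)"
proof -
  obtain A k where x: "x = (A, k)" by (cases x)
  obtain B k' where y: "y = (B, k')" by (cases y)
  obtain C k'' where z: "z = (C, k'')" by (cases z)
  show ?thesis unfolding x y z using fD_cocycle[of A B C] by (simp add: um4_assoc) blast
qed

fun invD :: "u4 \<times> bool \<Rightarrow> u4 \<times> bool" where
  "invD (A, k) = (uinv4 A, k \<noteq> odd (fD (uinv4 A) A))"

lemma um4_inv: "um4 (uinv4 A) A = (0, 0, 0, 0, 0, 0)"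
  by (cases A) (simp add: algebra_simps)

lemma um4_0: "um4 (0, 0, 0, 0, 0, 0) A = A"
  by (cases A) simp

lemma invD_l: "lawD (invD x) x = ((0, 0, 0, 0, 0, 0), False)"
  by (cases x) (auto simp: um4_inv)

lemma group_GD: "group GD"
proof (rule groupI)
  fix x :: "u4 \<times> bool"
  show "\<exists>y\<in>carrier GD. y \<otimes>\<^bsub>GD\<^esub> x = \<one>\<^bsub>GD\<^esub>"
    by (rule bexI[of _ "invD x"]) (simp_all add: invD_l)
next
  fix x :: "u4 \<times> bool"
  show "\<one>\<^bsub>GD\<^esub> \<otimes>\<^bsub>GD\<^esub> x = x" by (cases x) (simp add: um4_0, cases "fst x", auto)
qed (auto simp: lawD_assoc)

lemma inv_GD[simp]: "inv\<^bsub>GD\<^esub> x = invD x"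
  by (rule group.inv_equality[OF group_GD]) (simp_all add: invD_l)

lemma evalctx_GD: "evalctx GD h"
  by (rule evalctx.intro[OF group_GD]) (simp add: evalctx_axioms_def)

definition hD :: "nat \<Rightarrow> nat \<Rightarrow> u4 \<times> bool" where
  "hD i k = (if k = i then ((1, 0, 0, 0, 0, 0), False) else if k = Suc i then ((0, 1, 0, 0, 0, 0), False)
     else if k = Suc (Suc i) then ((0, 0, 1, 0, 0, 0), False) else ((0, 0, 0, 0, 0, 0), False))"

definition ND :: "(u4 \<times> bool) set" where
  "ND = {((a12, a23, a34, a13, a24, a14), k). even a12 \<and> even a23 \<and> even a34 \<and> even a13 \<and> even a24 \<and> even a14 \<and> \<not> k}"

lemma ND_sub: "subgroup ND GD"
proof (rule group.subgroupI[OF group_GD])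
  show "ND \<noteq> {}" by (auto simp: ND_def intro!: exI[of _ "((0,0,0,0,0,0),False)"])
qed (auto simp: ND_def)

lemma cent_l[simp]: "comm GD ((0, 0, 0, 0, 0, 0), b) g = ((0, 0, 0, 0, 0, 0), False)"
  by (cases g) (auto simp: comm_def um4_inv um4_0 algebra_simps)

lemma cent_r[simp]: "comm GD g ((0, 0, 0, 0, 0, 0), b) = ((0, 0, 0, 0, 0, 0), False)"
  by (cases g) (auto simp: comm_def um4_inv um4_0 algebra_simps)

lemma powD_x: "((1, 0, 0, 0, 0, 0), False) [^]\<^bsub>GD\<^esub> (k::nat) = ((int k, 0, 0, 0, 0, 0), False)"
  by (induction k) (simp_all add: algebra_simps)
lemma powD_y: "((0, 1, 0, 0, 0, 0), False) [^]\<^bsub>GD\<^esub> (k::nat) = ((0, int k, 0, 0, 0, 0), False)"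
  by (induction k) (simp_all add: algebra_simps)
lemma powD_z: "((0, 0, 1, 0, 0, 0), False) [^]\<^bsub>GD\<^esub> (k::nat) = ((0, 0, int k, 0, 0, 0), False)"
  by (induction k) (simp_all add: algebra_simps)
lemma powD_1: "((0, 0, 0, 0, 0, 0), False) [^]\<^bsub>GD\<^esub> (k::nat) = ((0, 0, 0, 0, 0, 0), False)"
  by (induction k) simp_all
lemma ipowD_1: "((0, 0, 0, 0, 0, 0), False) [^]\<^bsub>GD\<^esub> (k::int) = ((0, 0, 0, 0, 0, 0), False)"
  using group.int_pow_one[OF group_GD] by simp

lemma hD_conj:
  assumes "x \<in> ND"
  shows "hD i l \<otimes>\<^bsub>GD\<^esub> x \<otimes>\<^bsub>GD\<^esub> inv\<^bsub>GD\<^esub> (hD i l) \<in> ND \<and>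
         inv\<^bsub>GD\<^esub> (hD i l) \<otimes>\<^bsub>GD\<^esub> x \<otimes>\<^bsub>GD\<^esub> hD i l \<in> ND"
  using assms by (auto simp: hD_def ND_def)

lemma hD_far: "k + 2 \<le> l \<Longrightarrow> comm GD (hD i k) (hD i l) = ((0, 0, 0, 0, 0, 0), False)"
  by (auto simp: hD_def comm_def)

lemma hD_adj: "comm GD (hD i k) (hD i (Suc k)) = (if k = i then ((0, 0, 0, 1, 0, 0), False)
   else if k = Suc i then ((0, 0, 0, 0, 1, 0), False) else ((0, 0, 0, 0, 0, 0), False))"
  by (auto simp: hD_def comm_def)

lemma hD_pow_comm: "even (m::nat) \<Longrightarrow> comm GD (hD i k [^]\<^bsub>GD\<^esub> m) (hD i l) \<in> ND"
  by (auto simp: hD_def powD_x powD_y powD_z powD_1 comm_def ND_def)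

lemma TS: "comm GD ((0, 0, 0, 1, 0, 0), False) ((0, 0, 0, 0, 1, 0), False) = ((0, 0, 0, 0, 0, 0), True)"
  by (simp add: comm_def)

lemma D_main:
  assumes i: "1 \<le> i" "i + 2 < n" and m: "even m"
    and w: "w_elem n a b c d \<in> comm_subgroup (free_group n) (UT_R n m) (carrier (free_group n))"
  shows "even (d i)"
proof -
  interpret E: evalctx GD "hD i" by (rule evalctx_GD)
  have H2: "comm GD (evalw GD (hD i) \<rho>) (hD i l) \<in> ND" if "\<rho> \<in> UT_relators n m" for \<rho> l
  proof -
    from E.eval_rel_cases[OF that] show ?thesis
    proof (elim disjE exE conjE)
      fix k assume "evalw GD (hD i) \<rho> = hD i k [^]\<^bsub>GD\<^esub> m"
      then show ?thesis using hD_pow_comm[OF m] by simp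
    next
      fix k l' assume "k + 2 \<le> l'" "evalw GD (hD i) \<rho> = comm GD (hD i k) (hD i l')"
      then show ?thesis by (simp add: hD_far ND_def)
    next
      fix k assume "evalw GD (hD i) \<rho> = comm GD (comm GD (hD i k) (hD i (k + 1))) (hD i k)"
      then show ?thesis by (simp add: hD_adj) (auto simp: hD_def comm_def ND_def)
    next
      fix k assume "evalw GD (hD i) \<rho> = comm GD (comm GD (hD i k) (hD i (k + 1))) (hD i (k + 1))"
      then show ?thesis by (simp add: hD_adj) (auto simp: hD_def comm_def ND_def)
    next
      fix k assume "evalw GD (hD i) \<rho> = comm GD (comm GD (hD i k) (hD i (k + 1))) (comm GD (hD i (k + 1)) (hD i (k + 2)))"
      then show ?thesis by (auto simp: hD_adj TS ND_def)
    qed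
  qed
  have inN: "evalw GD (hD i) (w_elem n a b c d) \<in> ND"
    by (rule E.generic[OF ND_sub hD_conj H2 w])
  let ?\<iota> = "\<lambda>z::int. ((0::int, 0::int, 0::int, 0::int, 0::int, 0::int), odd z)"
  have add: "?\<iota> (x + y) = ?\<iota> x \<otimes>\<^bsub>GD\<^esub> ?\<iota> y" for x y by simp
  have cl: "?\<iota> x \<in> carrier GD" for x by simp
  have tpw: "((0::int, 0::int, 0::int, 0::int, 0::int, 0::int), True) [^]\<^bsub>GD\<^esub> (z::int) = ?\<iota> z" for z
    using E.iota_pow[of ?\<iota>, OF add cl, of 1 z] by simp
  have "evalw GD (hD i) (w_elem n a b c d) = ?\<iota> (sum_list [(0::int). k \<leftarrow> [1..<n], l \<leftarrow> [k+2..<n]]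
     + sum_list (map (\<lambda>_. 0) [1..<n-1]) + sum_list (map (\<lambda>_. 0) [1..<n-1])
     + sum_list (map (\<lambda>k. if k = i then d k else 0) [1..<n-2]))"
  proof (rule E.wprod_iota[of ?\<iota>, OF add cl])
    fix k l assume "1 \<le> k" "k + 2 \<le> l" "l < n"
    then show "comm GD (hD i k) (hD i l) [^]\<^bsub>GD\<^esub> a k l = ?\<iota> 0"
      by (simp add: hD_far ipowD_1)
  next
    fix k
    show "comm GD (comm GD (hD i k) (hD i (k + 1))) (hD i k) [^]\<^bsub>GD\<^esub> b k = ?\<iota> 0"
      by (simp add: hD_adj) (auto simp: hD_def comm_def ipowD_1)
  next
    fix k
    show "comm GD (comm GD (hD i k) (hD i (k + 1))) (hD i k \<otimes>\<^bsub>GD\<^esub> inv\<^bsub>GD\<^esub> (hD i (k + 1))) [^]\<^bsub>GD\<^esub> c k = ?\<iota> 0"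
      by (simp add: hD_adj) (auto simp: hD_def comm_def ipowD_1)
  next
    fix k
    show "comm GD (comm GD (hD i k) (hD i (k + 1))) (comm GD (hD i (k + 1)) (hD i (k + 2))) [^]\<^bsub>GD\<^esub> d k
       = ?\<iota> (if k = i then d k else 0)"
      by (simp add: hD_adj) (auto simp: comm_def ipowD_1 tpw)
  qed
  also have "\<dots> = ?\<iota> (d i)"
  proof -
    have iin: "i < n - 2" using i by linarith
    have z1: "sum_list [(0::int). k \<leftarrow> [1..<n], l \<leftarrow> [k+2..<n]] = 0"
      by (simp add: sum_list_concat' map_concat comp_def sum_list_zero_map)
    have z2: "sum_list (map (\<lambda>k. if k = i then d k else 0) [1..<n-2]) = d i"
      using sum_list_if_eq[where xs="[1..<n-2]" and f="d" and kz=i] i iin by (simp del: upt_Suc)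
    show ?thesis unfolding z1 z2 by (simp add: sum_list_zero_map)
  qed
  finally show ?thesis using inN by (simp add: ND_def)
qed


theorem mainTheorem3:
  fixes n m :: nat and a :: "nat \<Rightarrow> nat \<Rightarrow> int" and b c d :: "nat \<Rightarrow> int"
  assumes "n \<ge> 3" and "m \<ge> 2"
    and "w_elem n a b c d \<in> comm_subgroup (free_group n) (UT_R n m) (carrier (free_group n))"
  shows "(\<forall>i j. 1 \<le> i \<and> i < j - 1 \<and> j - 1 \<le> n - 2 \<longrightarrow> int m dvd a i j)
       \<and> (\<forall>i. 1 \<le> i \<and> i \<le> n - 2 \<longrightarrow> int m dvd b i \<and> int (gcd m (m choose 2)) dvd c i)
       \<and> (\<forall>i. 1 \<le> i \<and> i \<le> n - 3 \<longrightarrow> int (gcd 2 m) dvd d i)"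
proof (intro conjI allI impI)
  fix i j assume h: "1 \<le> i \<and> i < j - 1 \<and> j - 1 \<le> n - 2"
  then have "1 \<le> i" "i + 2 \<le> j" "j < n" using assms(1) by linarith+
  then show "int m dvd a i j" using A_main assms(3) by blast
next
  fix i assume h: "1 \<le> i \<and> i \<le> n - 2"
  then have "1 \<le> i" "i + 1 < n" using assms(1) by linarith+
  then have "int m dvd b i \<and> int (gcd m (m choose 2)) dvd c i"
    using B_main assms(2,3) by blast
  then show "int m dvd b i" "int (gcd m (m choose 2)) dvd c i" by simp_all
next
  fix i assume h: "1 \<le> i \<and> i \<le> n - 3"
  then have i: "1 \<le> i" "i + 2 < n" using assms(1) by linarith+
  show "int (gcd 2 m) dvd d i"
  proof (cases "even m")
    case True
    then have "even (d i)" using D_main[OF i True assms(3)] by blast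
    moreover have "gcd 2 m = 2" using True by (simp add: gcd_nat.absorb1)
    ultimately show ?thesis by simp
  next
    case False
    then have "gcd 2 m = 1"
      using False coprime_left_2_iff_odd[of m] coprime_iff_gcd_eq_1 by blast
    then show ?thesis by simp
  qed
qed

end
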